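(* Let $n\ge1$, $N=2^n$, and let $S_m^*$ ($0\le m\le n-1$) be the maps defined below. For a finitely supported $H:\{0,1\}^n\times\{0,1\}^n\times\mathbb{Z}\to\mathbb{R}$, regarded as a function on $\{0,1\}^n\times\{0,1\}^0\times\{0,1\}^n\times\{0,1\}^0\times\mathbb{Z}$, the function $P=S_0^*\circ S_1^*\circ\cdots\circ S_{n-1}^*(H)$ on $\{0,1\}^0\times\{0,1\}^n\times\{0,1\}^0\times\{0,1\}^n\times\mathbb{Z}$ satisfies, for all $\mathbf v_1,\mathbf v_2\in\{0,1\}^n$ and $e\in\mathbb{Z}$, $$P(\emptyset\mid\mathbf v_1\mid\emptyset\mid\mathbf v_2\mid e)=\sum_{\mathbf s_1\in\{0,1\}^n}\sum_{\mathbf s_2\in\{0,1\}^n}H\big(\mathbf s_1\mid\mathbf s_2\mid e-l^n_{\lambda(\mathbf s_1)}(\mathbf v_1)-l^n_{\lambda(\mathbf s_2)}(\mathbf v_2)\big).$$ Equivalently, $(x,y,z)\mapsto P(\emptyset\mid\lambda^{-1}(x)\mid\emptyset\mid\lambda^{-1}(y)\mid z)$ is the adjoint of the linear map $f\mapsto\tilde f$, $\tilde f(\mathbf s_1\mid\mathbf s_2\mid d)=\sum_{\mathbf u_1,\mathbf u_2\in\{0,1\}^n}f\big(\lambda(\mathbf u_1),\lambda(\mathbf u_2),l^n_{\lambda(\mathbf s_1)}(\mathbf u_1)+l^n_{\lambda(\mathbf s_2)}(\mathbf u_2)+d\big)$ (the 3D discrete Radon transform of planes), acting on finitely supported $f: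\{0,\dots,N-1\}^2\times\mathbb{Z}\to\mathbb{R}$.
   Context: Bit vectors: for $\mathbf u=(u_0,\dots,u_{k-1})\in\{0,1\}^k$, $\lambda(\mathbf u)=\sum_{i=0}^{k-1}u_i2^i$ (first entry least significant), $\lambda(\emptyset)=0$; $(a,\boldsymbol\sigma)$ denotes the vector with first entry $a$ followed by the entries of $\boldsymbol\sigma$. Discrete lines: $l^0_s(\emptyset)=0$ and $l^k_s(u_0,\dots,u_{k-1})=l^{k-1}_{\lfloor s/2\rfloor}(u_0,\dots,u_{k-2})+u_{k-1}\lfloor(s+1)/2\rfloor$ for $k\ge1$, $s\ge0$. For $0\le m\le n-1$ and finitely supported $H$ on $\{0,1\}^{m+1}\times\{0,1\}^{n-m-1}\times\{0,1\}^{m+1}\times\{0,1\}^{n-m-1}\times\mathbb{Z}$, $S_m^*H$ is the function on $\{0,1\}^{m}\times\{0,1\}^{n-m}\times\{0,1\}^{m}\times\{0,1\}^{n-m}\times\mathbb{Z}$ given by $(S_m^*H)(\boldsymbol\sigma_1\mid(w_1,\mathbf v_1)\mid\boldsymbol\sigma_2\mid(w_2,\mathbf v_2)\mid d)=\sum_{a,b\in\{0,1\}}H((a,\boldsymbol\sigma_1)\mid\mathbf v_1\mid(b,\boldsymbol\sigma_2)\mid\mathbf v_2\mid d-w_1(a+\lambda(\boldsymbol\sigma_1))-w_2(b+\lambda(\boldsymbol\sigma_2)))$. *)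

theory Defs
  imports Complex_Main
begin

text \<open>Bit vectors are lists of booleans; the first entry is the least significant bit.\<close>

fun lam :: "bool list \<Rightarrow> nat" where
  "lam [] = 0"
| "lam (a # u) = of_bool a + 2 * lam u"

text \<open>Discrete lines. The recursion peels off the LAST entry of the vector, so we
recurse on the reversed list: dline_rev s (rev u) is l^k_s(u).\<close>

fun dline_rev :: "nat \<Rightarrow> bool list \<Rightarrow> int" where
  "dline_rev s [] = 0"
| "dline_rev s (u # us) = dline_rev (s div 2) us + of_bool u * int ((s + 1) div 2)"

definition dline :: "nat \<Rightarrow> bool list \<Rightarrow> int" where
  "dline s u = dline_rev s (rev u)"

type_synonym fun5 = "bool list \<Rightarrow> bool list \<Rightarrow> bool list \<Rightarrow> bool list \<Rightarrow> int \<Rightarrow> real"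

text \<open>The map S_m^* (for ambient dimension n): input functions live on
{0,1}^(m+1) x {0,1}^(n-m-1) x {0,1}^(m+1) x {0,1}^(n-m-1) x Z, outputs on
{0,1}^m x {0,1}^(n-m) x {0,1}^m x {0,1}^(n-m) x Z; outside that domain the output is 0.
The second/fourth argument (w, v) is split as w = hd, v = tl.\<close>

definition S_star :: "nat \<Rightarrow> nat \<Rightarrow> fun5 \<Rightarrow> fun5" where
  "S_star n m H = (\<lambda>\<sigma>1 wv1 \<sigma>2 wv2 d.
     if m < n \<and> length \<sigma>1 = m \<and> length \<sigma>2 = m \<and> length wv1 = n - m \<and> length wv2 = n - m
     then (\<Sum>a\<in>(UNIV::bool set). \<Sum>b\<in>(UNIV::bool set).
             H (a # \<sigma>1) (tl wv1) (b # \<sigma>2) (tl wv2)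
               (d - of_bool (hd wv1) * (of_bool a + int (lam \<sigma>1))
                  - of_bool (hd wv2) * (of_bool b + int (lam \<sigma>2))))
     else 0)"

definition S_comp :: "nat \<Rightarrow> fun5 \<Rightarrow> fun5" where
  "S_comp n H = foldr (S_star n) [0..<n] H"

definition lift5 :: "(bool list \<Rightarrow> bool list \<Rightarrow> int \<Rightarrow> real) \<Rightarrow> fun5" where
  "lift5 H = (\<lambda>s1 v1 s2 v2 d. if v1 = [] \<and> v2 = [] then H s1 s2 d else 0)"

end

theory Submission
  imports Defs
begin

fun gsh :: "bool list \<Rightarrow> bool list \<Rightarrow> bool list \<Rightarrow> int" where
  "gsh (a#r) \<sigma> (w#wv) = of_bool w * (of_bool a + int (lam \<sigma>)) + gsh r (a#\<sigma>) wv"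
| "gsh _ _ _ = 0"

lemma lam_append: "lam (xs @ ys) = lam xs + 2 ^ length xs * lam ys"
  by (induction xs) auto

lemma lam_less: "lam xs < 2 ^ length xs"
  by (induction xs) auto

lemma dline_rev_snoc:
  "dline_rev s (xs @ [w]) = dline_rev s xs + of_bool w * int ((s div 2 ^ length xs + 1) div 2)"
proof (induction xs arbitrary: s)
  case Nil then show ?case by simp
next
  case (Cons x xs)
  have "s div 2 div 2 ^ length xs = s div 2 ^ length (x#xs)"
    by (simp add: div_mult2_eq)
  then show ?case using Cons by simp
qed

lemma gsh_dline:
  "length r = length wv \<Longrightarrow> gsh r \<sigma> wv = dline_rev (lam (rev r @ \<sigma>)) (rev wv)"
proof (induction r arbitrary: \<sigma> wv)
  case Nil then show ?case by simp
next
  case (Cons a r)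
  then obtain w wv' where wv: "wv = w # wv'" and len: "length r = length wv'"
    by (cases wv) auto
  define L where "L = lam (rev r @ a # \<sigma>)"
  have L: "L = lam (rev r) + 2 ^ length r * lam (a # \<sigma>)"
    unfolding L_def by (simp add: lam_append)
  have "L div 2 ^ length r = lam (a # \<sigma>)"
    unfolding L using lam_less[of "rev r"] by simp
  hence d: "(L div 2 ^ length wv' + 1) div 2 = of_bool a + lam \<sigma>"
    using len by (cases a) auto
  show ?case using Cons.IH[OF len, of "a#\<sigma>"] wv d
    by (simp add: dline_rev_snoc L_def[symmetric])
qed

lemma finite_len: "finite {r::bool list. length r = m}"
  using finite_lists_length_eq[of "UNIV::bool set" m] by simp

lemma sum_len_Suc:
  "(\<Sum>r\<in>{r::bool list. length r = Suc m}. f r) = (\<Sum>a\<in>UNIV. \<Sum>r\<in>{r. length r = m}. f (a#r))"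
proof -
  have e: "{r::bool list. length r = Suc m} = (\<lambda>(a,r). a#r) ` (UNIV \<times> {r. length r = m})"
    by (auto simp: length_Suc_conv image_iff)
  have i: "inj_on (\<lambda>(a,r). a#r) (UNIV \<times> {r::bool list. length r = m})"
    by (auto simp: inj_on_def)
  show ?thesis
    unfolding e sum.reindex[OF i] o_def
    by (subst sum.cartesian_product) (simp add: case_prod_unfold)
qed

lemma inv:
  "m + k = n \<Longrightarrow> length \<sigma>1 = k \<Longrightarrow> length \<sigma>2 = k \<Longrightarrow> length wv1 = m \<Longrightarrow> length wv2 = m \<Longrightarrow>
   foldr (S_star n) [k..<n] (lift5 H) \<sigma>1 wv1 \<sigma>2 wv2 d =
   (\<Sum>r1\<in>{r. length r = m}. \<Sum>r2\<in>{r. length r = m}.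
      H (rev r1 @ \<sigma>1) (rev r2 @ \<sigma>2) (d - gsh r1 \<sigma>1 wv1 - gsh r2 \<sigma>2 wv2))"
proof (induction m arbitrary: k \<sigma>1 \<sigma>2 wv1 wv2 d)
  case 0
  then show ?case by (simp add: lift5_def)
next
  case (Suc m)
  obtain w1 wv1' where w1: "wv1 = w1 # wv1'" "length wv1' = m"
    using Suc.prems by (cases wv1) auto
  obtain w2 wv2' where w2: "wv2 = w2 # wv2'" "length wv2' = m"
    using Suc.prems by (cases wv2) auto
  have kn: "k < n" using Suc.prems by simp
  have up: "[k..<n] = k # [Suc k..<n]" using kn by (simp add: upt_conv_Cons)
  have "foldr (S_star n) [k..<n] (lift5 H) \<sigma>1 wv1 \<sigma>2 wv2 d =
     (\<Sum>a\<in>UNIV. \<Sum>b\<in>UNIV. foldr (S_star n) [Suc k..<n] (lift5 H) (a#\<sigma>1) wv1' (b#\<sigma>2) wv2'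
        (d - of_bool w1 * (of_bool a + int (lam \<sigma>1)) - of_bool w2 * (of_bool b + int (lam \<sigma>2))))"
    using Suc.prems w1 w2 kn unfolding up by (simp add: S_star_def)
  also have "\<dots> = (\<Sum>a\<in>UNIV. \<Sum>b\<in>UNIV. \<Sum>r1\<in>{r. length r = m}. \<Sum>r2\<in>{r. length r = m}.
      H (rev r1 @ a # \<sigma>1) (rev r2 @ b # \<sigma>2)
        (d - of_bool w1 * (of_bool a + int (lam \<sigma>1)) - of_bool w2 * (of_bool b + int (lam \<sigma>2))
           - gsh r1 (a#\<sigma>1) wv1' - gsh r2 (b#\<sigma>2) wv2'))"
    using Suc.IH[of "Suc k"] Suc.prems w1 w2 by simp
  also have "\<dots> = (\<Sum>a\<in>UNIV. \<Sum>r1\<in>{r. length r = m}. \<Sum>b\<in>UNIV. \<Sum>r2\<in>{r. length r = m}.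
      H (rev r1 @ a # \<sigma>1) (rev r2 @ b # \<sigma>2)
        (d - of_bool w1 * (of_bool a + int (lam \<sigma>1)) - of_bool w2 * (of_bool b + int (lam \<sigma>2))
           - gsh r1 (a#\<sigma>1) wv1' - gsh r2 (b#\<sigma>2) wv2'))"
    by (rule sum.cong[OF refl], rule sum.swap)
  also have "\<dots> = (\<Sum>r1\<in>{r. length r = Suc m}. \<Sum>r2\<in>{r. length r = Suc m}.
      H (rev r1 @ \<sigma>1) (rev r2 @ \<sigma>2) (d - gsh r1 \<sigma>1 wv1 - gsh r2 \<sigma>2 wv2))"
    unfolding sum_len_Suc w1 w2 by (simp add: algebra_simps)
  finally show ?case .
qed

lemma sum_rev: "(\<Sum>r\<in>{r::bool list. length r = n}. F (rev r)) = (\<Sum>s\<in>{s. length s = n}. F s)"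
proof -
  have im: "rev ` {r::bool list. length r = n} = {r. length r = n}"
    by (auto simp: image_iff) (metis length_rev rev_rev_ident)
  have i: "inj_on rev {r::bool list. length r = n}" by (simp add: inj_on_def)
  show ?thesis using sum.reindex[OF i, of F] im by simp
qed

theorem mainTheorem5:
  fixes n :: nat and v1 v2 :: "bool list" and e :: int and H :: "bool list \<Rightarrow> bool list \<Rightarrow> int \<Rightarrow> real"
  assumes "n \<ge> 1"
    and "finite {(s1, s2, d). length s1 = n \<and> length s2 = n \<and> H s1 s2 d \<noteq> 0}"
    and "length v1 = n" and "length v2 = n"
  shows "S_comp n (lift5 H) [] v1 [] v2 e =
    (\<Sum>s1\<in>{s. length s = n}. \<Sum>s2\<in>{s. length s = n}.
        H s1 s2 (e - dline (lam s1) v1 - dline (lam s2) v2))"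
proof -
  have "S_comp n (lift5 H) [] v1 [] v2 e =
    (\<Sum>r1\<in>{r. length r = n}. \<Sum>r2\<in>{r. length r = n}.
      H (rev r1) (rev r2) (e - gsh r1 [] v1 - gsh r2 [] v2))"
    using inv[of n 0 n "[]" "[]" v1 v2 H e] assms unfolding S_comp_def by simp
  also have "\<dots> = (\<Sum>r1\<in>{r. length r = n}. \<Sum>r2\<in>{r. length r = n}.
      H (rev r1) (rev r2) (e - dline (lam (rev r1)) v1 - dline (lam (rev r2)) v2))"
    using assms by (intro sum.cong refl) (simp add: gsh_dline dline_def)
  also have "\<dots> = (\<Sum>s1\<in>{s. length s = n}. \<Sum>s2\<in>{s. length s = n}.
        H s1 s2 (e - dline (lam s1) v1 - dline (lam s2) v2))"
    using sum_rev[of "\<lambda>s1. \<Sum>s2\<in>{s. length s = n}. H s1 s2 (e - dline (lam s1) v1 - dline (lam s2) v2)" n]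
      sum_rev[of "\<lambda>s2. H (rev r1) s2 (e - dline (lam (rev r1)) v1 - dline (lam s2) v2)" n for r1]
    by simp
  finally show ?thesis .
qed

end
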